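(* Let $m,n$ be positive integers. The number of $m\times n$ partial alternating sign matrices whose entries sum to $1$ is $\binom{m+n}{m}-1$.
   Context: An $m\times n$ partial alternating sign matrix is an $m\times n$ matrix with entries in $\{-1,0,1\}$ such that: the entries of each row and of each column sum to $0$ or $1$; the nonzero entries in each row and in each column alternate in sign; in each column the first (topmost) nonzero entry, if any, is $1$, and in each row the last (rightmost) nonzero entry, if any, is $1$. *)

theory Defs
  imports Main "HOL-Library.Sublist"
begin

text \<open>An m x n matrix is encoded as a function A :: nat => nat => int with
  rows indexed 0..<m and columns 0..<n; entries outside this range are required
  to be 0, so that each matrix has a unique representation.\<close>

definition row_list :: "(nat \<Rightarrow> nat \<Rightarrow> int) \<Rightarrow> nat \<Rightarrow> nat \<Rightarrow> int list" where
  "row_list A n i = map (\<lambda>j. A i j) [0..<n]"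

definition col_list :: "(nat \<Rightarrow> nat \<Rightarrow> int) \<Rightarrow> nat \<Rightarrow> nat \<Rightarrow> int list" where
  "col_list A m j = map (\<lambda>i. A i j) [0..<m]"

definition alternating :: "int list \<Rightarrow> bool" where
  "alternating xs \<longleftrightarrow>
     (let ys = filter (\<lambda>x. x \<noteq> 0) xs in
      \<forall>k. Suc k < length ys \<longrightarrow> sgn (ys ! k) \<noteq> sgn (ys ! Suc k))"

definition partial_asm :: "nat \<Rightarrow> nat \<Rightarrow> (nat \<Rightarrow> nat \<Rightarrow> int) \<Rightarrow> bool" where
  "partial_asm m n A \<longleftrightarrow>
     (\<forall>i j. (i \<ge> m \<or> j \<ge> n) \<longrightarrow> A i j = 0) \<and>
     (\<forall>i<m. \<forall>j<n. A i j \<in> {-1, 0, 1}) \<and>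
     (\<forall>i<m. sum_list (row_list A n i) \<in> {0, 1}) \<and>
     (\<forall>j<n. sum_list (col_list A m j) \<in> {0, 1}) \<and>
     (\<forall>i<m. alternating (row_list A n i)) \<and>
     (\<forall>j<n. alternating (col_list A m j)) \<and>
     (\<forall>j<n. filter (\<lambda>x. x \<noteq> 0) (col_list A m j) \<noteq> [] \<longrightarrow>
              hd (filter (\<lambda>x. x \<noteq> 0) (col_list A m j)) = 1) \<and>
     (\<forall>i<m. filter (\<lambda>x. x \<noteq> 0) (row_list A n i) \<noteq> [] \<longrightarrow>
              last (filter (\<lambda>x. x \<noteq> 0) (row_list A n i)) = 1)"

definition entry_sum :: "nat \<Rightarrow> nat \<Rightarrow> (nat \<Rightarrow> nat \<Rightarrow> int) \<Rightarrow> int" where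
  "entry_sum m n A = (\<Sum>i<m. \<Sum>j<n. A i j)"

end

theory Submission
  imports Defs "HOL-Library.Multiset"
begin

fun good :: "int \<Rightarrow> int list \<Rightarrow> bool" where
  "good b [] = True"
| "good b (x # xs) = (b + x \<in> {0, 1} \<and> good (b + x) xs)"

lemma good_take:
  "b \<in> {0,1} \<Longrightarrow> good b xs \<longleftrightarrow> (\<forall>k\<le>length xs. b + sum_list (take k xs) \<in> {0,1})"
proof (induction xs arbitrary: b)
  case Nil
  then show ?case by simp
next
  case (Cons x xs)
  have "(\<forall>k\<le>length (x#xs). b + sum_list (take k (x#xs)) \<in> {0,1}) \<longleftrightarrow>
        (\<forall>k\<le>length xs. (b + x) + sum_list (take k xs) \<in> {0,1})" (is "?L = ?R")
  proof
    assume ?L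
    show ?R
    proof (intro allI impI)
      fix k assume "k \<le> length xs"
      then have "Suc k \<le> length (x#xs)" by simp
      with \<open>?L\<close> have "b + sum_list (take (Suc k) (x#xs)) \<in> {0,1}" by blast
      then show "(b + x) + sum_list (take k xs) \<in> {0,1}" by (simp add: add.assoc)
    qed
  next
    assume ?R
    show ?L
    proof (intro allI impI)
      fix k assume k: "k \<le> length (x#xs)"
      show "b + sum_list (take k (x#xs)) \<in> {0,1}"
      proof (cases k)
        case 0 then show ?thesis using Cons.prems by simp
      next
        case (Suc k')
        then have "k' \<le> length xs" using k by simp
        with \<open>?R\<close> have "(b + x) + sum_list (take k' xs) \<in> {0,1}" by blast
        then show ?thesis using Suc by (simp add: add.assoc)
      qed
    qed
  qed
  moreover have "b + x \<in> {0,1}" if r: ?R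
  proof -
    have "(b + x) + sum_list (take 0 xs) \<in> {0,1}" using r[rule_format, of 0] by simp
    then show ?thesis by simp
  qed
  ultimately show ?case using Cons.IH[of "b+x"] by auto
qed

lemma good_filter:
  "b \<in> {0,1} \<Longrightarrow> good b (filter (\<lambda>x. x \<noteq> 0) xs) = good b xs"
  by (induction xs arbitrary: b) auto

definition alt' :: "int list \<Rightarrow> bool" where
  "alt' ys \<longleftrightarrow> (\<forall>k. Suc k < length ys \<longrightarrow> sgn (ys ! k) \<noteq> sgn (ys ! Suc k))"

lemma alternating_alt': "alternating xs = alt' (filter (\<lambda>x. x \<noteq> 0) xs)"
  by (simp add: alternating_def alt'_def Let_def)

lemma alt'_Cons: "alt' (y # ys) \<longleftrightarrow> alt' ys \<and> (ys \<noteq> [] \<longrightarrow> sgn y \<noteq> sgn (hd ys))"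
proof
  assume a: "alt' (y # ys)"
  have "alt' ys" unfolding alt'_def
  proof (intro allI impI)
    fix k assume "Suc k < length ys"
    then have "Suc (Suc k) < length (y#ys)" by simp
    with a show "sgn (ys ! k) \<noteq> sgn (ys ! Suc k)" unfolding alt'_def by fastforce
  qed
  moreover have "ys \<noteq> [] \<longrightarrow> sgn y \<noteq> sgn (hd ys)"
  proof
    assume "ys \<noteq> []"
    then have "Suc 0 < length (y#ys)" by simp
    with a have "sgn ((y#ys) ! 0) \<noteq> sgn ((y#ys) ! Suc 0)" unfolding alt'_def by blast
    then show "sgn y \<noteq> sgn (hd ys)" using \<open>ys \<noteq> []\<close> by (simp add: hd_conv_nth)
  qed
  ultimately show "alt' ys \<and> (ys \<noteq> [] \<longrightarrow> sgn y \<noteq> sgn (hd ys))" by blast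
next
  assume a: "alt' ys \<and> (ys \<noteq> [] \<longrightarrow> sgn y \<noteq> sgn (hd ys))"
  show "alt' (y # ys)" unfolding alt'_def
  proof (intro allI impI)
    fix k assume k: "Suc k < length (y#ys)"
    show "sgn ((y#ys) ! k) \<noteq> sgn ((y#ys) ! Suc k)"
    proof (cases k)
      case 0
      then have "ys \<noteq> []" using k by auto
      then show ?thesis using a 0 by (simp add: hd_conv_nth)
    next
      case (Suc k')
      then show ?thesis using a k unfolding alt'_def by simp
    qed
  qed
qed

lemma good_alt:
  "b \<in> {0,1} \<Longrightarrow> set ys \<subseteq> {-1,1} \<Longrightarrow>
   good b ys \<longleftrightarrow> alt' ys \<and> (ys \<noteq> [] \<longrightarrow> hd ys = 1 - 2*b)"
proof (induction ys arbitrary: b)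
  case Nil
  then show ?case by (simp add: alt'_def)
next
  case (Cons y ys)
  have y: "y = -1 \<or> y = 1" using Cons.prems by auto
  have ys: "set ys \<subseteq> {-1,1}" using Cons.prems by auto
  have b: "b = 0 \<or> b = 1" using Cons.prems by auto
  show ?case
  proof (cases "b + y \<in> {0,1}")
    case True
    have yb: "y = 1 - 2*b" using True y b by auto
    have IH: "good (b+y) ys \<longleftrightarrow> alt' ys \<and> (ys \<noteq> [] \<longrightarrow> hd ys = 1 - 2*(b+y))"
      using Cons.IH[OF True ys] .
    have e: "1 - 2*(b+y) = -y" using yb by simp
    have hs: "(sgn y \<noteq> sgn (hd ys)) \<longleftrightarrow> hd ys = -y" if "ys \<noteq> []"
    proof -
      have "hd ys \<in> set ys" using that by simp
      then have "hd ys = -1 \<or> hd ys = 1" using ys by auto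
      then show ?thesis using y by auto
    qed
    have "good b (y#ys) \<longleftrightarrow> good (b+y) ys" using True by simp
    also have "\<dots> \<longleftrightarrow> alt' ys \<and> (ys \<noteq> [] \<longrightarrow> hd ys = -y)"
      using IH unfolding e .
    also have "\<dots> \<longleftrightarrow> alt' (y#ys) \<and> ((y#ys) \<noteq> [] \<longrightarrow> hd (y#ys) = 1 - 2*b)"
      unfolding alt'_Cons using hs yb by auto
    finally show ?thesis .
  next
    case False
    then have "y \<noteq> 1 - 2*b" using b by auto
    then show ?thesis using False by simp
  qed
qed

lemma alt'_rev_imp: "alt' ys \<Longrightarrow> alt' (rev ys)"
  unfolding alt'_def
proof (intro allI impI)
  fix k assume a: "\<forall>k. Suc k < length ys \<longrightarrow> sgn (ys ! k) \<noteq> sgn (ys ! Suc k)"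
    and k: "Suc k < length (rev ys)"
  define k' where "k' = length ys - Suc (Suc k)"
  have "Suc k' < length ys" using k unfolding k'_def by simp
  with a have "sgn (ys ! k') \<noteq> sgn (ys ! Suc k')" by blast
  moreover have "rev ys ! k = ys ! Suc k'" using k unfolding k'_def
    by (simp add: rev_nth Suc_diff_Suc)
  moreover have "rev ys ! Suc k = ys ! k'" using k unfolding k'_def
    by (simp add: rev_nth)
  ultimately show "sgn (rev ys ! k) \<noteq> sgn (rev ys ! Suc k)" by metis
qed

lemma alt'_rev: "alt' (rev ys) = alt' ys"
  using alt'_rev_imp[of ys] alt'_rev_imp[of "rev ys"] by auto

lemma col_cond:
  assumes "set xs \<subseteq> {-1,0,1}"
  shows "(alternating xs \<and> (filter (\<lambda>x. x \<noteq> 0) xs \<noteq> [] \<longrightarrow> hd (filter (\<lambda>x. x \<noteq> 0) xs) = 1)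
          \<and> sum_list xs \<in> {0,1}) \<longleftrightarrow> good 0 xs"
proof -
  have s: "set (filter (\<lambda>x. x \<noteq> 0) xs) \<subseteq> {-1,1}" using assms by auto
  have g: "good 0 xs \<longleftrightarrow> alternating xs \<and> (filter (\<lambda>x. x \<noteq> 0) xs \<noteq> [] \<longrightarrow> hd (filter (\<lambda>x. x \<noteq> 0) xs) = 1)"
    using good_filter[of 0 xs] good_alt[OF _ s, of 0] by (simp add: alternating_alt')
  have "sum_list xs \<in> {0,1}" if gg: "good 0 xs"
  proof -
    have "\<forall>k\<le>length xs. 0 + sum_list (take k xs) \<in> {0,1}" using good_take[of 0 xs] gg by simp
    from this[rule_format, of "length xs"] show ?thesis by simp
  qed
  then show ?thesis using g by blast
qed

lemma row_cond:
  assumes "set xs \<subseteq> {-1,0,1}"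
  shows "(alternating xs \<and> (filter (\<lambda>x. x \<noteq> 0) xs \<noteq> [] \<longrightarrow> last (filter (\<lambda>x. x \<noteq> 0) xs) = 1)
          \<and> sum_list xs \<in> {0,1}) \<longleftrightarrow> good 0 (rev xs)"
proof -
  have "set (rev xs) \<subseteq> {-1,0,1}" using assms by simp
  note c = col_cond[OF this]
  have "alternating (rev xs) = alternating xs"
    by (simp add: alternating_alt' rev_filter[symmetric] alt'_rev)
  moreover have "filter (\<lambda>x. x \<noteq> 0) (rev xs) = rev (filter (\<lambda>x. x \<noteq> 0) xs)" by (simp add: rev_filter)
  moreover have "sum_list (rev xs) = sum_list xs" by simp
  ultimately show ?thesis using c by (simp add: hd_rev)
qed

lemma sum_list_map_upt0: "sum_list (map f [0..<k]) = (\<Sum>i<k. f i)"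
  by (induction k) auto

lemma sum_list_take_rev:
  "k \<le> n \<Longrightarrow> sum_list (take k (rev (map (f::nat\<Rightarrow>int) [0..<n]))) = (\<Sum>j=n-k..<n. f j)"
proof (induction n arbitrary: k)
  case 0 then show ?case by simp
next
  case (Suc n)
  show ?case
  proof (cases k)
    case 0 then show ?thesis by simp
  next
    case (Suc k')
    then have "k' \<le> n" using Suc.prems by simp
    then have "sum_list (take k (rev (map f [0..<Suc n]))) = f n + (\<Sum>j=n-k'..<n. f j)"
      using Suc.IH[of k'] \<open>k = Suc k'\<close> by simp
    also have "\<dots> = (\<Sum>j=n-k'..<Suc n. f j)"
      using \<open>k' \<le> n\<close> by (auto simp: sum.atLeastLessThan_Suc)
    finally show ?thesis using \<open>k = Suc k'\<close> by simp
  qed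
qed

lemma col_good:
  "good 0 (col_list A m j) \<longleftrightarrow> (\<forall>i\<le>m. (\<Sum>i'<i. A i' j) \<in> {0,1})"
proof -
  have "good 0 (col_list A m j) \<longleftrightarrow> (\<forall>k\<le>m. sum_list (take k (col_list A m j)) \<in> {0,1})"
    using good_take[of 0 "col_list A m j"] by (simp add: col_list_def)
  also have "\<dots> \<longleftrightarrow> (\<forall>i\<le>m. (\<Sum>i'<i. A i' j) \<in> {0,1})"
    by (simp add: col_list_def take_map sum_list_map_upt0 min_def)
  finally show ?thesis .
qed

lemma row_good:
  "good 0 (rev (row_list A n i)) \<longleftrightarrow> (\<forall>j\<le>n. (\<Sum>j'=j..<n. A i j') \<in> {0,1})"
proof -
  have "good 0 (rev (row_list A n i)) \<longleftrightarrow> (\<forall>k\<le>n. sum_list (take k (rev (row_list A n i))) \<in> {0,1})"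
    using good_take[of 0 "rev (row_list A n i)"] by (simp add: row_list_def)
  also have "\<dots> \<longleftrightarrow> (\<forall>k\<le>n. (\<Sum>j'=n-k..<n. A i j') \<in> {0,1})"
    by (simp add: row_list_def sum_list_take_rev)
  also have "\<dots> \<longleftrightarrow> (\<forall>j\<le>n. (\<Sum>j'=j..<n. A i j') \<in> {0,1})"
  proof
    assume a: "\<forall>k\<le>n. (\<Sum>j'=n-k..<n. A i j') \<in> {0,1}"
    show "\<forall>j\<le>n. (\<Sum>j'=j..<n. A i j') \<in> {0,1}"
    proof (intro allI impI)
      fix j assume "j \<le> n"
      then have "n - (n - j) = j" by simp
      with a show "(\<Sum>j'=j..<n. A i j') \<in> {0,1}" by (metis diff_le_self)
    qed
  qed auto
  finally show ?thesis .
qed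

definition entries_ok :: "nat \<Rightarrow> nat \<Rightarrow> (nat \<Rightarrow> nat \<Rightarrow> int) \<Rightarrow> bool" where
  "entries_ok m n A \<longleftrightarrow> (\<forall>i j. (i \<ge> m \<or> j \<ge> n) \<longrightarrow> A i j = 0) \<and> (\<forall>i<m. \<forall>j<n. A i j \<in> {-1, 0, 1})"

definition CC :: "nat \<Rightarrow> (nat \<Rightarrow> nat \<Rightarrow> int) \<Rightarrow> nat \<Rightarrow> bool" where
  "CC m A j \<longleftrightarrow> (alternating (col_list A m j) \<and> (filter (\<lambda>x. x \<noteq> 0) (col_list A m j) \<noteq> [] \<longrightarrow> hd (filter (\<lambda>x. x \<noteq> 0) (col_list A m j)) = 1)
          \<and> sum_list (col_list A m j) \<in> {0,1})"

definition RR :: "nat \<Rightarrow> (nat \<Rightarrow> nat \<Rightarrow> int) \<Rightarrow> nat \<Rightarrow> bool" where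
  "RR n A i \<longleftrightarrow> (alternating (row_list A n i) \<and> (filter (\<lambda>x. x \<noteq> 0) (row_list A n i) \<noteq> [] \<longrightarrow> last (filter (\<lambda>x. x \<noteq> 0) (row_list A n i)) = 1)
          \<and> sum_list (row_list A n i) \<in> {0,1})"

lemma pasm_rearr:
  "partial_asm m n A \<longleftrightarrow> entries_ok m n A \<and> (\<forall>j<n. CC m A j) \<and> (\<forall>i<m. RR n A i)"
proof -
  have c: "(\<forall>j<n. CC m A j) \<longleftrightarrow> (\<forall>j<n. alternating (col_list A m j)) \<and> (\<forall>j<n. filter (\<lambda>x. x \<noteq> 0) (col_list A m j) \<noteq> [] \<longrightarrow> hd (filter (\<lambda>x. x \<noteq> 0) (col_list A m j)) = 1)
     \<and> (\<forall>j<n. sum_list (col_list A m j) \<in> {0,1})"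
    unfolding CC_def by blast
  have r: "(\<forall>i<m. RR n A i) \<longleftrightarrow> (\<forall>i<m. alternating (row_list A n i)) \<and> (\<forall>i<m. filter (\<lambda>x. x \<noteq> 0) (row_list A n i) \<noteq> [] \<longrightarrow> last (filter (\<lambda>x. x \<noteq> 0) (row_list A n i)) = 1)
     \<and> (\<forall>i<m. sum_list (row_list A n i) \<in> {0,1})"
    unfolding RR_def by blast
  show ?thesis unfolding c r partial_asm_def entries_ok_def by (rule iffI; elim conjE; intro conjI; assumption)
qed

lemma pasm_iff:
  "partial_asm m n A \<longleftrightarrow> entries_ok m n A \<and>
     (\<forall>j<n. \<forall>i\<le>m. (\<Sum>i'<i. A i' j) \<in> {0,1}) \<and>
     (\<forall>i<m. \<forall>j\<le>n. (\<Sum>j'=j..<n. A i j') \<in> {0,1})"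
proof (cases "entries_ok m n A")
  case True
  have sc: "set (col_list A m j) \<subseteq> {-1,0,1}" if "j < n" for j
  proof
    fix x assume "x \<in> set (col_list A m j)"
    then obtain i where "i < m" "x = A i j" by (auto simp: col_list_def)
    then show "x \<in> {-1,0,1}" using True that unfolding entries_ok_def by blast
  qed
  have sr: "set (row_list A n i) \<subseteq> {-1,0,1}" if "i < m" for i
  proof
    fix x assume "x \<in> set (row_list A n i)"
    then obtain j where "j < n" "x = A i j" by (auto simp: row_list_def)
    then show "x \<in> {-1,0,1}" using True that unfolding entries_ok_def by blast
  qed
  have hc: "CC m A j \<longleftrightarrow> (\<forall>i\<le>m. (\<Sum>i'<i. A i' j) \<in> {0,1})" if "j < n" for j
    unfolding CC_def col_cond[OF sc[OF that]] by (rule col_good)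
  have hr: "RR n A i \<longleftrightarrow> (\<forall>j\<le>n. (\<Sum>j'=j..<n. A i j') \<in> {0,1})" if "i < m" for i
    unfolding RR_def row_cond[OF sr[OF that]] by (rule row_good)
  show ?thesis unfolding pasm_rearr using True hc hr by simp
next
  case False
  then show ?thesis unfolding pasm_rearr by blast
qed

definition PP :: "nat \<Rightarrow> (nat \<Rightarrow> nat \<Rightarrow> int) \<Rightarrow> nat \<Rightarrow> nat \<Rightarrow> int" where
  "PP n A i j = (\<Sum>i'<i. \<Sum>j'=j..<n. A i' j')"

lemma PP_col: "j < n \<Longrightarrow> PP n A i j - PP n A i (Suc j) = (\<Sum>i'<i. A i' j)"
  unfolding PP_def by (simp add: sum_subtractf[symmetric] sum.atLeast_Suc_lessThan)

lemma PP_row: "PP n A (Suc i) j - PP n A i j = (\<Sum>j'=j..<n. A i j')"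
  unfolding PP_def by simp

lemma PP_zero: "PP n A 0 j = 0" "PP n A i n = 0"
  unfolding PP_def by auto

lemma PP_D: "j < n \<Longrightarrow> A i j = (PP n A (Suc i) j - PP n A i j) - (PP n A (Suc i) (Suc j) - PP n A i (Suc j))"
  unfolding PP_row by (simp add: sum.atLeast_Suc_lessThan)

lemma entry_sum_PP: "entry_sum m n A = PP n A m 0"
  unfolding entry_sum_def PP_def by (simp add: atLeast0LessThan)

lemma telescope:
  fixes g :: "nat \<Rightarrow> int"
  assumes "j \<le> n"
  shows "(\<Sum>j'=j..<n. g j' - g (Suc j')) = g j - g n"
proof -
  have "(\<Sum>j'=j..<n. g j' - g (Suc j')) = - (\<Sum>j'=j..<n. g (Suc j') - g j')"
    by (simp add: sum_negf[symmetric])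
  also have "\<dots> = g j - g n" using sum_Suc_diff'[OF assms, of g] by simp
  finally show ?thesis .
qed

lemma PP_T:
  assumes A: "\<And>i j. i < m \<Longrightarrow> j < n \<Longrightarrow> A i j = (Q (Suc i) j - Q i j) - (Q (Suc i) (Suc j) - Q i (Suc j))"
    and Q0: "\<And>j. Q 0 j = 0" and Qn: "\<And>i. i \<le> m \<Longrightarrow> Q i n = 0"
  shows "i \<le> m \<Longrightarrow> j \<le> n \<Longrightarrow> PP n A i j = Q i j"
proof (induction i arbitrary: j)
  case 0
  then show ?case by (simp add: PP_zero Q0)
next
  case (Suc i)
  have "PP n A (Suc i) j = PP n A i j + (\<Sum>j'=j..<n. A i j')"
    using PP_row[of n A i j] by simp
  also have "PP n A i j = Q i j" using Suc by simp
  also have "(\<Sum>j'=j..<n. A i j') = (\<Sum>j'=j..<n. (Q (Suc i) j' - Q i j') - (Q (Suc i) (Suc j') - Q i (Suc j')))"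
    using A Suc.prems by (intro sum.cong) auto
  also have "\<dots> = (Q (Suc i) j - Q i j) - (Q (Suc i) n - Q i n)"
    using telescope[OF Suc.prems(2), of "\<lambda>t. Q (Suc i) t - Q i t"] by simp
  finally show ?case using Qn[of i] Qn[of "Suc i"] Suc.prems by simp
qed

definition Qf :: "(nat \<Rightarrow> nat) \<Rightarrow> nat \<Rightarrow> nat \<Rightarrow> int" where
  "Qf l i j = (if i = 0 then 0 else if j < l (i - 1) then 1 else 0)"

definition psi :: "nat \<Rightarrow> nat \<Rightarrow> (nat \<Rightarrow> nat) \<Rightarrow> nat \<Rightarrow> nat \<Rightarrow> int" where
  "psi m n l = (\<lambda>i j. if i < m \<and> j < n then
      (Qf l (Suc i) j - Qf l i j) - (Qf l (Suc i) (Suc j) - Qf l i (Suc j)) else 0)"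

definition Lam :: "nat \<Rightarrow> nat \<Rightarrow> (nat \<Rightarrow> nat) set" where
  "Lam m n = {l. (\<forall>i<m. l i \<le> n) \<and> (\<forall>i. Suc i < m \<longrightarrow> l i \<le> l (Suc i)) \<and> (\<forall>i\<ge>m. l i = 0) \<and> 1 \<le> l (m - 1)}"

lemma PP_psi:
  assumes "\<forall>i<m. l i \<le> n" "i \<le> m" "j \<le> n"
  shows "PP n (psi m n l) i j = Qf l i j"
proof (rule PP_T[of m n])
  show "\<And>i j. i < m \<Longrightarrow> j < n \<Longrightarrow> psi m n l i j = Qf l (Suc i) j - Qf l i j - (Qf l (Suc i) (Suc j) - Qf l i (Suc j))"
    by (simp add: psi_def)
  show "\<And>j. Qf l 0 j = 0" by (simp add: Qf_def)
  show "\<And>i. i \<le> m \<Longrightarrow> Qf l i n = 0"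
  proof -
    fix i assume "i \<le> m"
    show "Qf l i n = 0"
    proof (cases i)
      case 0 then show ?thesis by (simp add: Qf_def)
    next
      case (Suc k)
      then have "l k \<le> n" using assms(1) \<open>i \<le> m\<close> by simp
      then show ?thesis using Suc by (simp add: Qf_def)
    qed
  qed
qed (use assms in auto)

lemma psi_in:
  assumes l: "l \<in> Lam m n" and m: "0 < m"
  shows "partial_asm m n (psi m n l) \<and> entry_sum m n (psi m n l) = 1"
proof -
  have lb: "\<forall>i<m. l i \<le> n" using l by (simp add: Lam_def)
  have lm: "\<And>i. Suc i < m \<Longrightarrow> l i \<le> l (Suc i)" using l by (simp add: Lam_def)
  have l1: "1 \<le> l (m - 1)" using l by (simp add: Lam_def)
  have E: "entries_ok m n (psi m n l)"
    unfolding entries_ok_def by (auto simp: psi_def Qf_def)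
  have C: "\<forall>j<n. \<forall>i\<le>m. (\<Sum>i'<i. psi m n l i' j) \<in> {0,1}"
  proof (intro allI impI)
    fix j i assume j: "j < n" and i: "i \<le> m"
    have "(\<Sum>i'<i. psi m n l i' j) = PP n (psi m n l) i j - PP n (psi m n l) i (Suc j)"
      using PP_col[OF j] by simp
    also have "\<dots> = Qf l i j - Qf l i (Suc j)"
      using PP_psi[OF lb i] j by simp
    finally show "(\<Sum>i'<i. psi m n l i' j) \<in> {0,1}" by (simp add: Qf_def)
  qed
  have R: "\<forall>i<m. \<forall>j\<le>n. (\<Sum>j'=j..<n. psi m n l i j') \<in> {0,1}"
  proof (intro allI impI)
    fix i j assume i: "i < m" and j: "j \<le> n"
    have "(\<Sum>j'=j..<n. psi m n l i j') = PP n (psi m n l) (Suc i) j - PP n (psi m n l) i j"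
      using PP_row by simp
    also have "\<dots> = Qf l (Suc i) j - Qf l i j"
      using PP_psi[OF lb _ j, of i] PP_psi[OF lb _ j, of "Suc i"] i by simp
    finally have eq: "(\<Sum>j'=j..<n. psi m n l i j') = Qf l (Suc i) j - Qf l i j" .
    show "(\<Sum>j'=j..<n. psi m n l i j') \<in> {0,1}"
    proof (cases i)
      case 0 then show ?thesis using eq by (simp add: Qf_def)
    next
      case (Suc k)
      then have "l k \<le> l i" using lm[of k] i by simp
      then show ?thesis using eq Suc by (auto simp: Qf_def)
    qed
  qed
  have S: "entry_sum m n (psi m n l) = 1"
  proof -
    have "entry_sum m n (psi m n l) = Qf l m 0"
      unfolding entry_sum_PP using PP_psi[OF lb, of m 0] by simp
    also have "\<dots> = 1" using l1 m by (simp add: Qf_def)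
    finally show ?thesis .
  qed
  show ?thesis using E C R S pasm_iff by blast
qed

lemma psi_inj: "inj_on (psi m n) (Lam m n)"
proof (rule inj_onI)
  fix l l' assume l: "l \<in> Lam m n" and l': "l' \<in> Lam m n" and eq: "psi m n l = psi m n l'"
  have lb: "\<forall>i<m. l i \<le> n" using l by (simp add: Lam_def)
  have lb': "\<forall>i<m. l' i \<le> n" using l' by (simp add: Lam_def)
  have q: "Qf l (Suc i) j = Qf l' (Suc i) j" if "i < m" "j \<le> n" for i j
    using PP_psi[OF lb, of "Suc i" j] PP_psi[OF lb', of "Suc i" j] that eq by simp
  show "l = l'"
  proof
    fix i
    show "l i = l' i"
    proof (cases "i < m")
      case False
      then show ?thesis using l l' by (simp add: Lam_def)
    next
      case True
      show ?thesis
      proof (rule ccontr)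
        assume "l i \<noteq> l' i"
        then have "l i < l' i \<or> l' i < l i" by arith
        then show False
        proof
          assume a: "l i < l' i"
          have "l i \<le> n" using lb True by simp
          from q[OF True this] a show False by (simp add: Qf_def)
        next
          assume a: "l' i < l i"
          have "l' i \<le> n" using lb' True by simp
          from q[OF True this] a show False by (simp add: Qf_def)
        qed
      qed
    qed
  qed
qed

lemma psi_surj:
  assumes A: "partial_asm m n A" "entry_sum m n A = 1" and m: "0 < m"
  shows "\<exists>l\<in>Lam m n. A = psi m n l"
proof -
  have E: "entries_ok m n A"
    and C0: "\<forall>j<n. \<forall>i\<le>m. (\<Sum>i'<i. A i' j) \<in> {0,1}"
    and R0: "\<forall>i<m. \<forall>j\<le>n. (\<Sum>j'=j..<n. A i j') \<in> {0,1}"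
    using A(1) pasm_iff by blast+
  let ?P = "PP n A"
  have C: "?P i j - ?P i (Suc j) \<in> {0,1}" if "i \<le> m" "j < n" for i j
    using C0 that PP_col[of j n A i] by simp
  have R: "?P (Suc i) j - ?P i j \<in> {0,1}" if "i < m" "j \<le> n" for i j
    using R0 that PP_row[of n A i j] by simp
  have monoJ: "?P i j' \<le> ?P i j" if "i \<le> m" "j \<le> j'" "j' \<le> n" for i j j'
    using that
  proof (induction j')
    case 0 then show ?case by simp
  next
    case (Suc j')
    show ?case
    proof (cases "j \<le> j'")
      case True
      then have "?P i j' \<le> ?P i j" using Suc by simp
      moreover have "?P i (Suc j') \<le> ?P i j'" using C[of i j'] Suc.prems by auto
      ultimately show ?thesis by simp
    next
      case False
      then have "j = Suc j'" using Suc.prems by simp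
      then show ?thesis by simp
    qed
  qed
  have monoI: "?P i j \<le> ?P i' j" if "i \<le> i'" "i' \<le> m" "j \<le> n" for i i' j
    using that
  proof (induction i')
    case 0 then show ?case by simp
  next
    case (Suc i')
    show ?case
    proof (cases "i \<le> i'")
      case True
      then have "?P i j \<le> ?P i' j" using Suc by simp
      moreover have "?P i' j \<le> ?P (Suc i') j" using R[of i' j] Suc.prems by auto
      ultimately show ?thesis by simp
    next
      case False
      then have "i = Suc i'" using Suc.prems by simp
      then show ?thesis by simp
    qed
  qed
  have top: "?P m 0 = 1" using A(2) entry_sum_PP by simp
  have rng: "0 \<le> ?P i j \<and> ?P i j \<le> 1" if "i \<le> m" "j \<le> n" for i j
  proof
    show "0 \<le> ?P i j" using monoI[of 0 i j] that PP_zero(1)[of n A j] by simp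
    have "?P i j \<le> ?P m j" using monoI[of i m j] that by simp
    also have "\<dots> \<le> ?P m 0" using monoJ[of m 0 j] that by simp
    finally show "?P i j \<le> 1" using top by simp
  qed
  define l where "l i = (if i < m then (LEAST j. ?P (Suc i) j = 0) else 0)" for i
  have ex0: "?P (Suc i) n = 0" for i using PP_zero(2) by simp
  have lb: "l i \<le> n" if "i < m" for i
    using that Least_le[of "\<lambda>j. ?P (Suc i) j = 0" n, OF ex0] unfolding l_def by simp
  have ch: "?P (Suc i) j = (if j < l i then 1 else 0)" if i: "i < m" and j: "j \<le> n" for i j
  proof (cases "j < l i")
    case True
    then have "j < (LEAST j. ?P (Suc i) j = 0)" using i unfolding l_def by simp
    then have "?P (Suc i) j \<noteq> 0" by (rule not_less_Least)
    then show ?thesis using rng[of "Suc i" j] i j True by simp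
  next
    case False
    have "?P (Suc i) (LEAST j. ?P (Suc i) j = 0) = 0" by (rule LeastI[of _ n], rule ex0)
    then have z: "?P (Suc i) (l i) = 0" using i unfolding l_def by simp
    have "?P (Suc i) j \<le> ?P (Suc i) (l i)" using monoJ[of "Suc i" "l i" j] i j False by simp
    then show ?thesis using z rng[of "Suc i" j] i j False by simp
  qed
  have PQ: "?P i j = Qf l i j" if "i \<le> m" "j \<le> n" for i j
  proof (cases i)
    case 0 then show ?thesis by (simp add: PP_zero Qf_def)
  next
    case (Suc k)
    then show ?thesis using ch[of k j] that by (simp add: Qf_def)
  qed
  have eqA: "A = psi m n l"
  proof (intro ext)
    fix i j
    show "A i j = psi m n l i j"
    proof (cases "i < m \<and> j < n")
      case True
      then have "A i j = (?P (Suc i) j - ?P i j) - (?P (Suc i) (Suc j) - ?P i (Suc j))"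
        using PP_D by blast
      also have "\<dots> = (Qf l (Suc i) j - Qf l i j) - (Qf l (Suc i) (Suc j) - Qf l i (Suc j))"
        using PQ True by simp
      finally show ?thesis using True by (simp add: psi_def)
    next
      case False
      then show ?thesis using E unfolding entries_ok_def psi_def by auto
    qed
  qed
  have "l \<in> Lam m n"
    unfolding Lam_def
  proof (intro CollectI conjI allI impI)
    show "\<And>i. i < m \<Longrightarrow> l i \<le> n" by (rule lb)
    show "\<And>i. m \<le> i \<Longrightarrow> l i = 0" by (simp add: l_def)
    show "l i \<le> l (Suc i)" if si: "Suc i < m" for i
    proof (rule ccontr)
      assume "\<not> l i \<le> l (Suc i)"
      then have lt: "l (Suc i) < l i" by simp
      have jn: "l (Suc i) \<le> n" using lb si by simp
      have "?P (Suc i) (l (Suc i)) = 1" using ch[of i "l (Suc i)"] si jn lt by simp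
      moreover have "?P (Suc (Suc i)) (l (Suc i)) = 0" using ch[of "Suc i" "l (Suc i)"] si jn by simp
      moreover have "?P (Suc i) (l (Suc i)) \<le> ?P (Suc (Suc i)) (l (Suc i))"
        using monoI[of "Suc i" "Suc (Suc i)" "l (Suc i)"] si jn by simp
      ultimately show False by simp
    qed
    have "?P (Suc (m - 1)) 0 = 1" using top m by simp
    then show "1 \<le> l (m - 1)" using ch[of "m - 1" 0] m by (simp split: if_splits)
  qed
  then show ?thesis using eqA by blast
qed

lemma card_M_Lam:
  assumes "0 < m"
  shows "card {A. partial_asm m n A \<and> entry_sum m n A = 1} = card (Lam m n)"
proof -
  have "{A. partial_asm m n A \<and> entry_sum m n A = 1} = psi m n ` Lam m n"
    using psi_in[OF _ assms] psi_surj[OF _ _ assms] by blast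
  then show ?thesis using card_image[OF psi_inj] by simp
qed

definition Lam0 :: "nat \<Rightarrow> nat \<Rightarrow> (nat \<Rightarrow> nat) set" where
  "Lam0 m n = {l. (\<forall>i<m. l i \<le> n) \<and> (\<forall>i. Suc i < m \<longrightarrow> l i \<le> l (Suc i)) \<and> (\<forall>i\<ge>m. l i = 0)}"

lemma Lam0_chain:
  assumes "l \<in> Lam0 m n" "i \<le> i'" "i' < m"
  shows "l i \<le> l i'"
  using assms(2,3)
proof (induction i')
  case 0 then show ?case by simp
next
  case (Suc i')
  show ?case
  proof (cases "i \<le> i'")
    case True
    then have "l i \<le> l i'" using Suc by simp
    moreover have "l i' \<le> l (Suc i')" using assms(1) Suc.prems by (simp add: Lam0_def)
    ultimately show ?thesis by simp
  next
    case False
    then show ?thesis using Suc.prems by (simp add: le_Suc_eq)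
  qed
qed

lemma Lam0_sorted: "l \<in> Lam0 m n \<Longrightarrow> sorted (map l [0..<m])"
  unfolding sorted_iff_nth_mono using Lam0_chain by auto

lemma bij_Lam0:
  "bij_betw (\<lambda>l. mset (map l [0..<m])) (Lam0 m n) (multisets_of_size {0..n} m)"
proof (rule bij_betw_imageI)
  show "inj_on (\<lambda>l. mset (map l [0..<m])) (Lam0 m n)"
  proof (rule inj_onI)
    fix l l' assume l: "l \<in> Lam0 m n" and l': "l' \<in> Lam0 m n"
      and eq: "mset (map l [0..<m]) = mset (map l' [0..<m])"
    have "sort (map l' [0..<m]) = map l [0..<m]"
      using properties_for_sort[OF eq Lam0_sorted[OF l]] .
    moreover have "sort (map l' [0..<m]) = map l' [0..<m]"
      using Lam0_sorted[OF l'] by (simp add: sorted_sort_id)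
    ultimately have ml: "map l [0..<m] = map l' [0..<m]" by simp
    show "l = l'"
    proof
      fix i show "l i = l' i"
      proof (cases "i < m")
        case True
        then show ?thesis using ml by (simp add: map_eq_conv)
      next
        case False
        then show ?thesis using l l' by (simp add: Lam0_def)
      qed
    qed
  qed
  show "(\<lambda>l. mset (map l [0..<m])) ` Lam0 m n = multisets_of_size {0..n} m"
  proof
    show "(\<lambda>l. mset (map l [0..<m])) ` Lam0 m n \<subseteq> multisets_of_size {0..n} m"
      by (auto simp: multisets_of_size_def Lam0_def)
  next
    show "multisets_of_size {0..n} m \<subseteq> (\<lambda>l. mset (map l [0..<m])) ` Lam0 m n"
    proof
      fix M assume M: "M \<in> multisets_of_size {0..n} m"
      define xs where "xs = sorted_list_of_multiset M"
      have len: "length xs = m"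
        using M unfolding xs_def multisets_of_size_def
        by (metis (mono_tags, lifting) mem_Collect_eq mset_sorted_list_of_multiset size_mset)
      have setxs: "set xs \<subseteq> {0..n}"
        using M unfolding xs_def multisets_of_size_def
        by (metis (mono_tags, lifting) mem_Collect_eq mset_sorted_list_of_multiset set_mset_mset)
      have sxs: "sorted xs" unfolding xs_def by simp
      define l where "l i = (if i < m then xs ! i else 0)" for i
      have mp: "map l [0..<m] = xs"
        by (rule nth_equalityI) (auto simp: len l_def)
      have "l \<in> Lam0 m n"
        unfolding Lam0_def
      proof (intro CollectI conjI allI impI)
        fix i assume "i < m"
        then have "xs ! i \<in> set xs" using len by simp
        then show "l i \<le> n" using setxs \<open>i < m\<close> by (auto simp: l_def)
      next
        fix i assume "Suc i < m"
        then show "l i \<le> l (Suc i)" using sorted_nth_mono[OF sxs, of i "Suc i"] len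
          by (simp add: l_def)
      next
        fix i assume "m \<le> i"
        then show "l i = 0" by (simp add: l_def)
      qed
      moreover have "mset (map l [0..<m]) = M" using mp unfolding xs_def by simp
      ultimately show "M \<in> (\<lambda>l. mset (map l [0..<m])) ` Lam0 m n" by force
    qed
  qed
qed

lemma card_Lam0: "card (Lam0 m n) = (m + n) choose m" and finite_Lam0: "finite (Lam0 m n)"
proof -
  have "card (Lam0 m n) = card (multisets_of_size {0..n} m)"
    by (rule bij_betw_same_card[OF bij_Lam0])
  also have "\<dots> = (m + n) choose m"
    by (simp add: card_multisets_of_size add.commute)
  finally show "card (Lam0 m n) = (m + n) choose m" .
  show "finite (Lam0 m n)"
    using bij_betw_finite[OF bij_Lam0] finite_multisets_of_size[of "{0..n}" m] by simp
qed

lemma Lam_eq: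
  assumes "0 < m"
  shows "Lam m n = Lam0 m n - {\<lambda>_. 0}"
proof
  show "Lam m n \<subseteq> Lam0 m n - {\<lambda>_. 0}"
  proof
    fix l assume l: "l \<in> Lam m n"
    then have "1 \<le> l (m - 1)" by (simp add: Lam_def)
    then have "l \<noteq> (\<lambda>_. 0)" by auto
    then show "l \<in> Lam0 m n - {\<lambda>_. 0}" using l by (simp add: Lam_def Lam0_def)
  qed
next
  show "Lam0 m n - {\<lambda>_. 0} \<subseteq> Lam m n"
  proof
    fix l assume l: "l \<in> Lam0 m n - {\<lambda>_. 0}"
    have "1 \<le> l (m - 1)"
    proof (rule ccontr)
      assume "\<not> 1 \<le> l (m - 1)"
      then have z: "l (m - 1) = 0" by simp
      have "l = (\<lambda>_. 0)"
      proof
        fix i show "l i = 0"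
        proof (cases "i < m")
          case True
          then have "l i \<le> l (m - 1)" using Lam0_chain[of l m n i "m - 1"] l by simp
          then show ?thesis using z by simp
        next
          case False then show ?thesis using l by (simp add: Lam0_def)
        qed
      qed
      then show False using l by simp
    qed
    then show "l \<in> Lam m n" using l by (simp add: Lam_def Lam0_def)
  qed
qed

lemma card_Lam: "0 < m \<Longrightarrow> card (Lam m n) = ((m + n) choose m) - 1"
proof -
  assume m: "0 < m"
  have "(\<lambda>_. 0) \<in> Lam0 m n" by (simp add: Lam0_def)
  then have "card (Lam0 m n - {\<lambda>_. 0}) = card (Lam0 m n) - 1"
    using finite_Lam0 by (simp add: card_Diff_singleton)
  then show ?thesis using Lam_eq[OF m] card_Lam0 by simp
qed

theorem corollary3p22:
  fixes m n :: nat
  assumes "m > 0" and "n > 0"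
  shows "card {A. partial_asm m n A \<and> entry_sum m n A = 1} = ((m + n) choose m) - 1"
  using card_M_Lam[OF assms(1)] card_Lam[OF assms(1)] by simp

end
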